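(* Let $t\ge1$. \begin{enumerate} \item If the minimal hyperbinary expansion of $n$ is $1^t2$, then $A(n)$ is the directed path graph \[1^t2\twoheadrightarrow 1^{t-1}20\twoheadrightarrow\cdots\twoheadrightarrow 20^t\to 10^{t+1}.\] \item If the minimal hyperbinary expansion of $n$ is $2^t$, then $A(n)$ is the directed path graph \[2^t\to 102^{t-1}\to 1102^{t-2}\to\cdots\to 1^t0.\] \end{enumerate} Here each arrow is an arc with the indicated label, and there are no other vertices or arcs.
   Context: A hyperbinary expansion of a nonnegative integer $n$ is a word $x_0\cdots x_k$ over $\{0,1,2\}$ with $x_0\ne0$ and $\sum_i x_i2^{k-i}=n$. $\mathcal H(n)$ is the set of such expansions. $A(n)$ is the directed graph on $\mathcal H(n)$ with the following labeled arcs, for arbitrary words $\mathbf x,\mathbf y$ over $\{0,1,2\}$ whenever both endpoints lie in $\mathcal H(n)$: \begin{itemize} \item an arc labeled $\to$ from $\mathbf x02\mathbf y$ to $\mathbf x10\mathbf y$ and from $2\mathbf y$ to $10\mathbf y$; \item an arc labeled $\twoheadrightarrow$ from $\mathbf x12\mathbf y$ to $\mathbf x20\mathbf y$. \end{itemize} The minimal hyperbinary expansion of $n$ is its unique hyperbinary expansion containing no digit $0$. Exponents denote repetition of a letter, e.g. $1^t=1\cdots1$ ($t$ times). *)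

theory Defs
  imports Main
begin

text \<open>Words over {0,1,2} are lists of natural-number digits, most significant digit first.\<close>

definition word_val :: "nat list \<Rightarrow> nat" where
  "word_val xs = (\<Sum>i<length xs. xs ! i * 2 ^ (length xs - 1 - i))"

definition hyperbinary :: "nat \<Rightarrow> nat list set" where
  "hyperbinary n = {xs. xs \<noteq> [] \<and> set xs \<subseteq> {0,1,2} \<and> hd xs \<noteq> 0 \<and> word_val xs = n}"

definition minimal_hyperbinary :: "nat \<Rightarrow> nat list \<Rightarrow> bool" where
  "minimal_hyperbinary n w \<longleftrightarrow> w \<in> hyperbinary n \<and> 0 \<notin> set w"

datatype arc_label = Single | Double  (* Single: \<rightarrow>,  Double: \<twoheadrightarrow> *)

definition arcs :: "nat \<Rightarrow> (nat list \<times> arc_label \<times> nat list) set" where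
  "arcs n =
     {(u, Single, v) | u v. u \<in> hyperbinary n \<and> v \<in> hyperbinary n \<and>
        ((\<exists>x y. u = x @ [0,2] @ y \<and> v = x @ [1,0] @ y) \<or> (\<exists>y. u = 2 # y \<and> v = [1,0] @ y))}
   \<union> {(u, Double, v) | u v. u \<in> hyperbinary n \<and> v \<in> hyperbinary n \<and>
        (\<exists>x y. u = x @ [1,2] @ y \<and> v = x @ [2,0] @ y)}"

end

theory Submission imports Defs begin

lemma wv_nil[simp]: "word_val [] = 0" by (simp add: word_val_def)

lemma wv_snoc[simp]: "word_val (xs@[d]) = 2 * word_val xs + d"
proof -
  let ?n = "length xs"
  have "word_val (xs@[d]) = (\<Sum>i<Suc ?n. (xs@[d])!i * 2^(?n-i))"
    by (simp add: word_val_def)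
  also have "\<dots> = (\<Sum>i<?n. xs!i * 2^(?n-i)) + d"
    by (simp add: nth_append)
  also have "(\<Sum>i<?n. xs!i * 2^(?n-i)) = 2 * (\<Sum>i<?n. xs!i * 2^(?n-1-i))"
    unfolding sum_distrib_left
  proof (rule sum.cong)
    fix i assume "i \<in> {..<?n}"
    then have "?n - i = Suc (?n-1-i)" by auto
    then show "xs!i * 2^(?n-i) = 2 * (xs!i * 2^(?n-1-i))" by simp
  qed simp
  finally show ?thesis by (simp add: word_val_def)
qed

lemma hb_ne: "w \<in> hyperbinary m \<Longrightarrow> w \<noteq> []" by (simp add: hyperbinary_def)
lemma hb_val: "w \<in> hyperbinary m \<Longrightarrow> word_val w = m" by (simp add: hyperbinary_def)

lemma hb_snocI: "xs \<in> hyperbinary k \<Longrightarrow> d \<in> {0,1,2} \<Longrightarrow> m = 2*k+d \<Longrightarrow> xs @ [d] \<in> hyperbinary m"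
  unfolding hyperbinary_def by auto

lemma hb_snocD: "xs \<noteq> [] \<Longrightarrow> xs @ [d] \<in> hyperbinary m \<Longrightarrow> d \<in> {0,1,2} \<and> xs \<in> hyperbinary (word_val xs) \<and> m = 2 * word_val xs + d"
  unfolding hyperbinary_def by auto

lemma hb_singleD: "[d] \<in> hyperbinary m \<Longrightarrow> d \<in> {1,2} \<and> m = d"
  using wv_snoc[of "[]" d] unfolding hyperbinary_def by auto

lemma hb_singleI: "d \<in> {1,2} \<Longrightarrow> [d] \<in> hyperbinary d"
  using wv_snoc[of "[]" d] unfolding hyperbinary_def by auto

lemma hb_even: "hyperbinary (2*m+2) = (\<lambda>xs. xs@[0]) ` hyperbinary (m+1) \<union> (\<lambda>xs. xs@[2]) ` hyperbinary m \<union> (if m = 0 then {[2]} else {})"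
proof (intro set_eqI iffI)
  fix w assume w: "w \<in> hyperbinary (2*m+2)"
  then have "w \<noteq> []" by (rule hb_ne)
  then obtain xs d where wd: "w = xs @ [d]" by (metis rev_exhaust)
  show "w \<in> (\<lambda>xs. xs@[0]) ` hyperbinary (m+1) \<union> (\<lambda>xs. xs@[2]) ` hyperbinary m \<union> (if m = 0 then {[2]} else {})"
  proof (cases "xs = []")
    case True
    then have "d \<in> {1,2}" "2*m+2 = d" using w wd hb_singleD by auto
    then have "m = 0" "d = 2" by auto
    then show ?thesis using True wd by simp
  next
    case False
    then have h: "d \<in> {0,1,2}" "xs \<in> hyperbinary (word_val xs)" "2*m+2 = 2 * word_val xs + d"
      using w wd hb_snocD by blast+
    then consider "d = 0" "word_val xs = m+1" | "d = 2" "word_val xs = m" by auto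
    then show ?thesis
    proof cases
      case 1 then show ?thesis using wd h(2) by auto
    next
      case 2 then show ?thesis using wd h(2) by auto
    qed
  qed
next
  fix w assume "w \<in> (\<lambda>xs. xs@[0]) ` hyperbinary (m+1) \<union> (\<lambda>xs. xs@[2]) ` hyperbinary m \<union> (if m = 0 then {[2]} else {})"
  then consider xs where "xs \<in> hyperbinary (m+1)" "w = xs@[0]" | xs where "xs \<in> hyperbinary m" "w = xs@[2]"
     | "m = 0" "w = [2]" by (auto split: if_splits)
  then show "w \<in> hyperbinary (2*m+2)"
  proof cases
    case 1 then show ?thesis using hb_snocI[of xs "m+1" 0] by simp
  next
    case 2 then show ?thesis using hb_snocI[of xs m 2] by simp
  next
    case 3
    then have e: "2*m+2 = (2::nat)" "w = [2]" by simp_all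
    show ?thesis unfolding e using hb_singleI[of 2] by simp
  qed
qed

lemma hb_odd: "hyperbinary (2*m+1) = (\<lambda>xs. xs@[1]) ` hyperbinary m \<union> (if m = 0 then {[1]} else {})"
proof (intro set_eqI iffI)
  fix w assume w: "w \<in> hyperbinary (2*m+1)"
  then have "w \<noteq> []" by (rule hb_ne)
  then obtain xs d where wd: "w = xs @ [d]" by (metis rev_exhaust)
  show "w \<in> (\<lambda>xs. xs@[1]) ` hyperbinary m \<union> (if m = 0 then {[1]} else {})"
  proof (cases "xs = []")
    case True
    then have "d \<in> {1,2}" "2*m+1 = d" using w wd hb_singleD by auto
    then have "m = 0" "d = 1" by auto
    then show ?thesis using True wd by simp
  next
    case False
    then have h: "d \<in> {0,1,2}" "xs \<in> hyperbinary (word_val xs)" "2*m+1 = 2 * word_val xs + d"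
      using w wd hb_snocD by blast+
    have "d \<noteq> 0" "d \<noteq> 2" using h(3) by presburger+
    then have "d = 1" using h(1) by auto
    then have "d = 1" "word_val xs = m" using h(3) by auto
    then show ?thesis using wd h(2) by auto
  qed
next
  fix w assume "w \<in> (\<lambda>xs. xs@[1]) ` hyperbinary m \<union> (if m = 0 then {[1]} else {})"
  then consider xs where "xs \<in> hyperbinary m" "w = xs@[1]" | "m = 0" "w = [1]" by (auto split: if_splits)
  then show "w \<in> hyperbinary (2*m+1)"
  proof cases
    case 1 then show ?thesis using hb_snocI[of xs m 1] by simp
  next
    case 2 then show ?thesis using hb_singleI[of 1] by simp
  qed
qed

lemma wv_zero: "word_val xs = 0 \<Longrightarrow> set xs \<subseteq> {0}"
proof (induction xs rule: rev_induct)
  case (snoc x xs)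
  from snoc.prems have "word_val xs = 0" "x = 0" by simp_all
  with snoc.IH show ?case by simp
qed simp

lemma hb_0: "hyperbinary 0 = {}"
proof -
  { fix w assume "w \<in> hyperbinary 0"
    then have w: "word_val w = 0" "w \<noteq> []" "hd w \<noteq> 0" by (simp_all add: hyperbinary_def)
    from w(1) have "set w \<subseteq> {0}" by (rule wv_zero)
    moreover from w(2) have "hd w \<in> set w" by (rule hd_in_set)
    ultimately have "hd w = 0" by blast
    with w(3) have False by simp }
  then show ?thesis by blast
qed

lemma wv_rep1: "word_val (replicate t 1) = 2^t - 1"
proof (induction t)
  case (Suc t)
  have r: "replicate (Suc t) (1::nat) = replicate t 1 @ [1]" by (simp add: replicate_append_same)
  obtain b where b: "(2::nat)^t = Suc b" using not0_implies_Suc[of "(2::nat)^t"] by auto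
  show ?case unfolding r wv_snoc Suc power_Suc b by simp
qed simp

lemma wv_rep2: "word_val (replicate t 2) = 2^(t+1) - 2"
proof (induction t)
  case (Suc t)
  have r: "replicate (Suc t) (2::nat) = replicate t 2 @ [2]" by (simp add: replicate_append_same)
  obtain b where b: "(2::nat)^t = Suc b" using not0_implies_Suc[of "(2::nat)^t"] by auto
  show ?case unfolding r wv_snoc Suc.IH using b by simp
qed simp

lemma hb_1: "hyperbinary 1 = {[1]}"
proof -
  have "hyperbinary 1 = hyperbinary (2*0+1)" by simp
  also have "\<dots> = {[1]}" unfolding hb_odd hb_0 by simp
  finally show ?thesis .
qed

lemma hb_2: "hyperbinary 2 = {[1,0],[2]}"
proof -
  have "(2::nat) = 2*0+2" by simp
  then have "hyperbinary 2 = hyperbinary (2*0+2)" by (rule arg_cong)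
  also have "\<dots> = {[1,0],[2]}" unfolding hb_even hb_0 using hb_1 by auto
  finally show ?thesis .
qed

lemma E1: "k \<ge> 1 \<Longrightarrow> hyperbinary (2^k - 1) = {replicate k 1}"
proof (induction k rule: dec_induct)
  case base
  show ?case using hb_1 by simp
next
  case (step k)
  have "(2::nat) \<le> 2^k" using step(1) power_increasing[of 1 k "2::nat"] by simp
  then obtain b where b: "(2::nat)^k = Suc (Suc b)" by (metis add_2_eq_Suc le_Suc_ex add.commute)
  have eq: "(2::nat)^(Suc k) - 1 = 2 * (2^k - 1) + 1" "2^k - 1 \<noteq> (0::nat)" unfolding power_Suc b by simp_all
  show ?case unfolding eq(1) hb_odd using step eq(2) by (simp add: replicate_append_same)
qed


definition P1 :: "nat \<Rightarrow> nat \<Rightarrow> nat list" where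
  "P1 t i = (if i \<le> t then replicate (t - i) 1 @ [2] @ replicate i 0 else 1 # replicate (t + 1) 0)"

definition Q :: "nat \<Rightarrow> nat \<Rightarrow> nat list" where
  "Q t i = (if i = 0 then replicate t 2 else replicate (i - 1) 1 @ [1, 0] @ replicate (t - i) 2)"

lemma P1_Suc: "i \<le> k+1 \<Longrightarrow> P1 (Suc k) (Suc i) = P1 k i @ [0]"
  by (auto simp: P1_def Suc_diff_le replicate_append_same)

lemma E2: "hyperbinary (2^(k+1)) = P1 k ` {0..k+1}"
proof (induction k)
  case 0
  note hb_2
  moreover have "P1 0 ` {0..1} = {[1,0],[2]}" by (auto simp: P1_def atLeast0_atMost_Suc)
  ultimately show ?case by simp
next
  case (Suc k)
  obtain b where b: "(2::nat)^k = Suc b" using not0_implies_Suc[of "(2::nat)^k"] by auto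
  have eq: "(2::nat)^(Suc k+1) = 2 * (2^(k+1) - 1) + 2" "2^(k+1) - 1 + 1 = (2::nat)^(k+1)" "2^(k+1) - 1 \<noteq> (0::nat)"
    using b by simp_all
  have h1: "hyperbinary (2^(k+1) - 1) = {replicate (k+1) 1}" by (rule E1) simp
  have "{0..Suc k + 1} = insert 0 (Suc ` {0..k+1})"
    by (simp add: atLeast0AtMost atMost_Suc_eq_insert_0 del: atMost_Suc)
  moreover have "P1 (Suc k) ` (Suc ` {0..k+1}) = (\<lambda>i. P1 k i @ [0]) ` {0..k+1}"
    unfolding image_image by (rule image_cong) (auto simp: P1_Suc)
  ultimately have "P1 (Suc k) ` {0..Suc k + 1} = insert (P1 (Suc k) 0) ((\<lambda>i. P1 k i @ [0]) ` {0..k+1})"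
    by simp
  moreover have "P1 (Suc k) 0 = replicate (k+1) 1 @ [2]" by (simp add: P1_def)
  ultimately show ?case unfolding eq(1) hb_even eq(2) Suc.IH h1 using eq(3)
    by (auto simp: image_image)
qed

lemma Q_Suc: "i \<le> k \<Longrightarrow> Q (Suc k) i = Q k i @ [2]"
  by (auto simp: Q_def Suc_diff_le replicate_append_same)

lemma E3: "t \<ge> 1 \<Longrightarrow> hyperbinary (2^(t+1) - 2) = Q t ` {0..t}"
proof (induction t rule: dec_induct)
  case base
  note hb_2
  moreover have "Q 1 ` {0..1} = {[1,0],[2]}" by (auto simp: Q_def atLeast0_atMost_Suc)
  ultimately show ?case by simp
next
  case (step k)
  have p: "(2::nat)^(k+1) \<ge> 4" using step(1) power_increasing[of 1 k "2::nat"] by simp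
  then have eq: "(2::nat)^(Suc k+1) - 2 = 2 * (2^(k+1) - 2) + 2" "2^(k+1) - 2 + 1 = (2::nat)^(k+1) - 1" "2^(k+1) - 2 \<noteq> (0::nat)"
    by auto
  have h1: "hyperbinary (2^(k+1) - 1) = {replicate (k+1) 1}" by (rule E1) simp
  have "{0..Suc k} = insert (Suc k) {0..k}" by auto
  moreover have "Q (Suc k) ` {0..k} = (\<lambda>i. Q k i @ [2]) ` {0..k}"
    by (rule image_cong) (auto simp: Q_Suc)
  ultimately have "Q (Suc k) ` {0..Suc k} = insert (Q (Suc k) (Suc k)) ((\<lambda>i. Q k i @ [2]) ` {0..k})"
    by simp
  moreover have "Q (Suc k) (Suc k) = replicate (k+1) 1 @ [0]" by (simp add: Q_def replicate_append_same)
  ultimately show ?case unfolding eq(1) hb_even eq(2) step.IH h1 using eq(3)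
    by (auto simp: image_image)
qed


lemma dec: "u = x @ [c,d] @ y \<Longrightarrow> Suc (length x) < length u \<and> u ! length x = c \<and> u ! Suc (length x) = d \<and> x = take (length x) u \<and> y = drop (Suc (Suc (length x))) u"
  by (simp add: nth_append)

lemma rep_cons: "replicate j x @ x # r = x # replicate j x @ r"
  by (induction j) auto

lemma P1_len: "i \<le> t \<Longrightarrow> length (P1 t i) = Suc t"
  by (simp add: P1_def)

lemma P1_nth: "i \<le> t \<Longrightarrow> j < Suc t \<Longrightarrow> P1 t i ! j = (if j < t-i then 1 else if j = t-i then 2 else 0)"
  by (auto simp: P1_def nth_append nth_Cons')

lemma P1_last_len: "length (P1 t (Suc t)) = Suc (Suc t)"
  by (simp add: P1_def)

lemma P1_last_nth: "j < Suc (Suc t) \<Longrightarrow> P1 t (Suc t) ! j = (if j = 0 then 1 else 0)"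
  by (simp add: P1_def nth_Cons')

lemma P1_02: assumes "i \<le> Suc t" "P1 t i = x @ [0,2] @ y" shows False
proof -
  note d = dec[OF assms(2)]
  show False
  proof (cases "i \<le> t")
    case True
    then show False using d P1_nth[OF True, of "length x"] P1_nth[OF True, of "Suc (length x)"] P1_len[OF True]
      by (auto split: if_splits)
  next
    case False
    then have "i = Suc t" using assms(1) by simp
    then show False using d P1_last_nth[of "Suc (length x)" t] P1_last_len[of t] by simp
  qed
qed

lemma P1_2: assumes "i \<le> Suc t" "P1 t i = 2 # y" shows "i = t \<and> [1,0] @ y = P1 t (Suc t)"
proof (cases "i \<le> t")
  case True
  then have "P1 t i ! 0 = 2" using assms(2) by simp
  then have "i = t" using P1_nth[OF True, of 0] True by (auto split: if_splits)
  then show ?thesis using assms(2) by (simp add: P1_def)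
next
  case False
  then have "i = Suc t" using assms(1) by simp
  then show ?thesis using assms(2) by (simp add: P1_def)
qed

lemma P1_12: assumes "i \<le> Suc t" "P1 t i = x @ [1,2] @ y" shows "i < t \<and> x @ [2,0] @ y = P1 t (Suc i)"
proof -
  note d = dec[OF assms(2)]
  show ?thesis
  proof (cases "i \<le> t")
    case True
    then have L: "Suc (length x) = t - i" "i < t"
      using d P1_nth[OF True, of "length x"] P1_nth[OF True, of "Suc (length x)"] P1_len[OF True]
      by (auto split: if_splits)
    then obtain m where m: "t - i = Suc m" "length x = m" by auto
    have u: "P1 t i = replicate m 1 @ [1,2] @ replicate i 0" using True m by (simp add: P1_def rep_cons)
    have x: "x = replicate m 1" using d m u by simp
    have y: "y = replicate i 0" using d m u by simp
    have "P1 t (Suc i) = replicate m 1 @ [2] @ replicate (Suc i) 0" using L m by (simp add: P1_def)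
    then show ?thesis using x y L by simp
  next
    case False
    then have "i = Suc t" using assms(1) by simp
    then show ?thesis using d P1_last_nth[of "Suc (length x)" t] P1_last_len[of t] by simp
  qed
qed

lemma Q_alt: "1 \<le> i \<Longrightarrow> Q t i = replicate i 1 @ [0] @ replicate (t-i) 2"
  by (cases i) (auto simp: Q_def rep_cons)

lemma Q0_nth: "j < t \<Longrightarrow> Q t 0 ! j = 2" by (simp add: Q_def)
lemma Q0_len: "length (Q t 0) = t" by (simp add: Q_def)
lemma Q_len: "1 \<le> i \<Longrightarrow> i \<le> t \<Longrightarrow> length (Q t i) = Suc t" by (simp add: Q_alt)
lemma Q_nth: "1 \<le> i \<Longrightarrow> i \<le> t \<Longrightarrow> j < Suc t \<Longrightarrow> Q t i ! j = (if j < i then 1 else if j = i then 0 else 2)"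
  by (auto simp: Q_alt nth_append nth_Cons')

lemma Q_02: assumes "i \<le> t" "Q t i = x @ [0,2] @ y" shows "1 \<le> i \<and> i < t \<and> x @ [1,0] @ y = Q t (Suc i)"
proof -
  note d = dec[OF assms(2)]
  show ?thesis
  proof (cases "i = 0")
    case True
    then show ?thesis using d Q0_nth[of "length x" t] Q0_len[of t] by simp
  next
    case False
    then have i1: "1 \<le> i" by simp
    have L: "length x = i" "i < t"
      using d Q_nth[OF i1 assms(1), of "length x"] Q_nth[OF i1 assms(1), of "Suc (length x)"] Q_len[OF i1 assms(1)]
      by (auto split: if_splits)
    then obtain m where m: "t - i = Suc m" by (metis Suc_diff_Suc)
    have u: "Q t i = replicate i 1 @ [0] @ replicate (Suc m) 2" using i1 m by (simp add: Q_alt)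
    have x: "x = replicate i 1" using d L u by simp
    have y: "y = replicate m 2" using d L u by simp
    have "Q t (Suc i) = replicate (Suc i) 1 @ [0] @ replicate m 2" using m by (simp add: Q_alt)
    then show ?thesis using x y L i1 by (simp add: rep_cons)
  qed
qed

lemma Q_2: assumes "1 \<le> t" "i \<le> t" "Q t i = 2 # y" shows "i = 0 \<and> [1,0] @ y = Q t 1"
proof (cases "i = 0")
  case True
  obtain m where m: "t = Suc m" using assms(1) by (cases t) auto
  then show ?thesis using assms(3) True by (simp add: Q_def)
next
  case False
  then have "Q t i ! 0 = 1" using Q_nth[of i t 0] assms by simp
  then show ?thesis using assms(3) by simp
qed

lemma Q_12: assumes "i \<le> t" "Q t i = x @ [1,2] @ y" shows False
proof -
  note d = dec[OF assms(2)]
  show False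
  proof (cases "i = 0")
    case True
    then show ?thesis using d Q0_nth[of "length x" t] Q0_len[of t] by simp
  next
    case False
    then have i1: "1 \<le> i" by simp
    show False
      using d Q_nth[OF i1 assms(1), of "length x"] Q_nth[OF i1 assms(1), of "Suc (length x)"] Q_len[OF i1 assms(1)]
      by (auto split: if_splits)
  qed
qed


lemma P1_count: "i \<le> Suc t \<Longrightarrow> length (filter (\<lambda>d. d = 0) (P1 t i)) = i"
  by (auto simp: P1_def filter_replicate)

lemma Q_count: "i \<le> t \<Longrightarrow> length (filter (\<lambda>d. d = 1) (Q t i)) = i"
  by (cases "i = 0") (auto simp: Q_def filter_replicate)

lemma arcsI_2: "u \<in> hyperbinary n \<Longrightarrow> v \<in> hyperbinary n \<Longrightarrow> u = 2 # y \<Longrightarrow> v = [1,0] @ y \<Longrightarrow> (u, Single, v) \<in> arcs n"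
  unfolding arcs_def by blast

lemma arcsI_02: "u \<in> hyperbinary n \<Longrightarrow> v \<in> hyperbinary n \<Longrightarrow> u = x @ [0,2] @ y \<Longrightarrow> v = x @ [1,0] @ y \<Longrightarrow> (u, Single, v) \<in> arcs n"
  unfolding arcs_def by blast

lemma arcsI_12: "u \<in> hyperbinary n \<Longrightarrow> v \<in> hyperbinary n \<Longrightarrow> u = x @ [1,2] @ y \<Longrightarrow> v = x @ [2,0] @ y \<Longrightarrow> (u, Double, v) \<in> arcs n"
  unfolding arcs_def by blast

lemma part1:
  assumes t: "t \<ge> 1" and mh: "minimal_hyperbinary n (replicate t 1 @ [2])"
  shows "hyperbinary n = P1 t ` {0..t+1} \<and> inj_on (P1 t) {0..t+1} \<and>
           arcs n = {(P1 t i, Double, P1 t (i+1)) | i. i < t} \<union> {(P1 t t, Single, P1 t (t+1))}"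
proof -
  have "n = word_val (replicate t 1 @ [2])" using mh by (simp add: minimal_hyperbinary_def hyperbinary_def)
  also have "\<dots> = 2^(t+1)"
  proof -
    obtain b where b: "(2::nat)^t = Suc b" using not0_implies_Suc[of "(2::nat)^t"] by auto
    have "word_val (replicate t 1 @ [2]) = 2 * (2^t - 1) + 2" by (simp only: wv_snoc wv_rep1)
    then show ?thesis using b by simp
  qed
  finally have n: "n = 2^(t+1)" .
  have H: "hyperbinary n = P1 t ` {0..t+1}" unfolding n by (rule E2)
  have inj: "inj_on (P1 t) {0..t+1}"
    by (rule inj_on_inverseI[where g = "\<lambda>w. length (filter (\<lambda>d. d = 0) w)"]) (use P1_count in auto)
  have memH: "P1 t i \<in> hyperbinary n" if "i \<le> Suc t" for i using that H by auto
  have arcs: "arcs n = {(P1 t i, Double, P1 t (i+1)) | i. i < t} \<union> {(P1 t t, Single, P1 t (t+1))}"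
  proof (intro set_eqI iffI)
    fix e assume "e \<in> arcs n"
    then consider u v where "e = (u, Single, v)" "u \<in> hyperbinary n" "v \<in> hyperbinary n"
        "(\<exists>x y. u = x @ [0,2] @ y \<and> v = x @ [1,0] @ y) \<or> (\<exists>y. u = 2 # y \<and> v = [1,0] @ y)"
      | u v where "e = (u, Double, v)" "u \<in> hyperbinary n" "v \<in> hyperbinary n"
        "\<exists>x y. u = x @ [1,2] @ y \<and> v = x @ [2,0] @ y"
      unfolding arcs_def by blast
    then show "e \<in> {(P1 t i, Double, P1 t (i+1)) | i. i < t} \<union> {(P1 t t, Single, P1 t (t+1))}"
    proof cases
      case 1
      obtain i where i: "i \<le> Suc t" "u = P1 t i" using 1(2) H by auto
      from 1(4) show ?thesis
      proof
        assume "\<exists>x y. u = x @ [0,2] @ y \<and> v = x @ [1,0] @ y"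
        then obtain x y where "u = x @ [0,2] @ y" by blast
        then show ?thesis using P1_02[OF i(1), of x y] i(2) by simp
      next
        assume "\<exists>y. u = 2 # y \<and> v = [1,0] @ y"
        then obtain y where "u = 2 # y" "v = [1,0] @ y" by blast
        then show ?thesis using P1_2[OF i(1), of y] i(2) 1(1) by simp
      qed
    next
      case 2
      obtain i where i: "i \<le> Suc t" "u = P1 t i" using 2(2) H by auto
      obtain x y where "u = x @ [1,2] @ y" "v = x @ [2,0] @ y" using 2(4) by blast
      then have "i < t \<and> v = P1 t (Suc i)" using P1_12[OF i(1), of x y] i(2) by simp
      then show ?thesis using 2(1) i(2) by auto
    qed
  next
    fix e assume "e \<in> {(P1 t i, Double, P1 t (i+1)) | i. i < t} \<union> {(P1 t t, Single, P1 t (t+1))}"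
    then consider i where "i < t" "e = (P1 t i, Double, P1 t (i+1))" | "e = (P1 t t, Single, P1 t (t+1))"
      by blast
    then show "e \<in> arcs n"
    proof cases
      case 1
      obtain m where m: "t - i = Suc m" using 1(1) by (metis Suc_diff_Suc)
      have "P1 t i = replicate m 1 @ [1,2] @ replicate i 0" using 1(1) m by (simp add: P1_def rep_cons)
      moreover have "P1 t (i+1) = replicate m 1 @ [2,0] @ replicate i 0" using 1(1) m by (simp add: P1_def)
      ultimately show ?thesis unfolding arcs_def using 1 memH[of i] memH[of "i+1"] by auto
    next
      case 2
      have "P1 t t = 2 # replicate t 0" "P1 t (t+1) = [1,0] @ replicate t 0" by (simp_all add: P1_def)
      then show ?thesis unfolding arcs_def using 2 memH[of t] memH[of "t+1"] by auto
    qed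
  qed
  show ?thesis using H inj arcs by blast
qed

lemma part2:
  assumes t: "t \<ge> 1" and mh: "minimal_hyperbinary n (replicate t 2)"
  shows "hyperbinary n = Q t ` {0..t} \<and> inj_on (Q t) {0..t} \<and>
           arcs n = {(Q t i, Single, Q t (i+1)) | i. i < t}"
proof -
  have n: "n = 2^(t+1) - 2" using mh by (simp add: minimal_hyperbinary_def hyperbinary_def wv_rep2)
  have H: "hyperbinary n = Q t ` {0..t}" unfolding n by (rule E3[OF t])
  have inj: "inj_on (Q t) {0..t}"
    by (rule inj_on_inverseI[where g = "\<lambda>w. length (filter (\<lambda>d. d = 1) w)"]) (use Q_count in auto)
  have memH: "Q t i \<in> hyperbinary n" if "i \<le> t" for i using that H by auto
  have arcs: "arcs n = {(Q t i, Single, Q t (i+1)) | i. i < t}"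
  proof (intro set_eqI iffI)
    fix e assume "e \<in> arcs n"
    then consider u v where "e = (u, Single, v)" "u \<in> hyperbinary n" "v \<in> hyperbinary n"
        "(\<exists>x y. u = x @ [0,2] @ y \<and> v = x @ [1,0] @ y) \<or> (\<exists>y. u = 2 # y \<and> v = [1,0] @ y)"
      | u v where "e = (u, Double, v)" "u \<in> hyperbinary n" "v \<in> hyperbinary n"
        "\<exists>x y. u = x @ [1,2] @ y \<and> v = x @ [2,0] @ y"
      unfolding arcs_def by blast
    then show "e \<in> {(Q t i, Single, Q t (i+1)) | i. i < t}"
    proof cases
      case 1
      obtain i where i: "i \<le> t" "u = Q t i" using 1(2) H by auto
      from 1(4) show ?thesis
      proof
        assume "\<exists>x y. u = x @ [0,2] @ y \<and> v = x @ [1,0] @ y"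
        then obtain x y where "u = x @ [0,2] @ y" "v = x @ [1,0] @ y" by blast
        then have "i < t \<and> v = Q t (Suc i)" using Q_02[OF i(1), of x y] i(2) by simp
        then show ?thesis using 1(1) i(2) by auto
      next
        assume "\<exists>y. u = 2 # y \<and> v = [1,0] @ y"
        then obtain y where "u = 2 # y" "v = [1,0] @ y" by blast
        then have "i = 0 \<and> v = Q t 1" using Q_2[OF t i(1), of y] i(2) by simp
        then have "e = (Q t 0, Single, Q t (0+1))" using 1(1) i(2) by simp
        moreover have "0 < t" using t by simp
        ultimately show ?thesis by blast
      qed
    next
      case 2
      obtain i where i: "i \<le> t" "u = Q t i" using 2(2) H by auto
      obtain x y where "u = x @ [1,2] @ y" using 2(4) by blast
      then show ?thesis using Q_12[OF i(1), of x y] i(2) by simp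
    qed
  next
    fix e assume "e \<in> {(Q t i, Single, Q t (i+1)) | i. i < t}"
    then have "\<exists>i. e = (Q t i, Single, Q t (i+1)) \<and> i < t" by (simp only: mem_Collect_eq)
    then obtain i where i: "i < t" "e = (Q t i, Single, Q t (i+1))" by blast
    define m where "m = t - i - 1"
    have m: "t - i = Suc m" using i(1) by (simp add: m_def)
    show "e \<in> arcs n"
    proof (cases "i = 0")
      case True
      have "Q t i = 2 # replicate m 2" "Q t (i+1) = [1,0] @ replicate m 2" using True m by (simp_all add: Q_def)
      then have "(Q t i, Single, Q t (i+1)) \<in> arcs n" using i(1) by (intro arcsI_2[OF memH memH]) simp_all
      then show ?thesis using i(2) by simp
    next
      case False
      have "Q t i = replicate i 1 @ [0,2] @ replicate m 2" using False m by (simp add: Q_alt)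
      moreover have "Q t (i+1) = replicate i 1 @ [1,0] @ replicate m 2" using m by (simp add: Q_alt rep_cons)
      ultimately have "(Q t i, Single, Q t (i+1)) \<in> arcs n" using i(1) by (intro arcsI_02[OF memH memH]) simp_all
      then show ?thesis using i(2) by simp
    qed
  qed
  show ?thesis using H inj arcs by blast
qed

theorem mainTheorem7:
  fixes t n :: nat
  assumes "t \<ge> 1"
  shows
    "(minimal_hyperbinary n (replicate t 1 @ [2]) \<longrightarrow>
       (let p = (\<lambda>i. if i \<le> t then replicate (t - i) 1 @ [2] @ replicate i 0
                      else 1 # replicate (t + 1) 0)
        in hyperbinary n = p ` {0..t+1} \<and> inj_on p {0..t+1} \<and>
           arcs n = {(p i, Double, p (i+1)) | i. i < t} \<union> {(p t, Single, p (t+1))}))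
   \<and>
    (minimal_hyperbinary n (replicate t 2) \<longrightarrow>
       (let q = (\<lambda>i. if i = 0 then replicate t 2
                      else replicate (i - 1) 1 @ [1, 0] @ replicate (t - i) 2)
        in hyperbinary n = q ` {0..t} \<and> inj_on q {0..t} \<and>
           arcs n = {(q i, Single, q (i+1)) | i. i < t}))"
proof -
  have pe: "(\<lambda>i. if i \<le> t then replicate (t - i) 1 @ [2] @ replicate i 0
                      else 1 # replicate (t + 1) 0) = P1 t"
    by (rule ext) (simp add: P1_def)
  have qe: "(\<lambda>i. if i = 0 then replicate t 2
                      else replicate (i - 1) 1 @ [1, 0] @ replicate (t - i) 2) = Q t"
    by (rule ext) (simp add: Q_def)
  show ?thesis unfolding pe qe Let_def
    apply (rule conjI)
     apply (rule impI)
     apply (erule part1[OF assms])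
    apply (rule impI)
    apply (erule part2[OF assms])
    done
qed

end
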